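(* Let $V$ be a finite-dimensional real vector space with a metric $\mu$, let $\Phi'$ be a finite set of increasing filtrations on $V$ which has a compatible splitting, and let $\Phi\subset\Phi'$. Assume that $\mu$ gives compatible splittings of $\Phi$. Then there exists $g\in\mathrm{Aut}(V)$ such that $g(W_k)=W_k$ for all $W\in\Phi$ and all $k$, and such that $\mu$ gives compatible splittings of $g\Phi'=\{gW : W\in\Phi'\}$, where $(gW)_k:=g(W_k)$.
   Context: A metric on $V$ is a positive definite symmetric bilinear form. Filtrations $W=(W_k)_{k\in\mathbb Z}$ are increasing, with $W_k=0$ for $k\ll0$ and $W_k=V$ for $k\gg0$. Given a splitting of each $W$ in a finite set $\Phi$ of filtrations, these splittings are called compatible if there is a direct sum decomposition $V=\bigoplus_{w\in\mathbb Z^\Phi}V[w]$ such that for every $W\in\Phi$ and $k\in\mathbb Z$ the weight-$k$ part of the splitting of $W$ equals $\bigoplus_{w(W)=k}V[w]$; $\Phi$ "has a compatible splitting" if such splittings exist. A metric $\mu$ gives, for each $W$, the orthogonal splitting $V=\bigoplus_k V^W_k$ with $V^W_k$ the $\mu$-orthogonal complement of $W_{k-1}$ in $W_k$; "$\mu$ gives compatible splittings of $\Phi$" means these orthogonal splittings are compatible. *)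

theory Defs
  imports "HOL-Analysis.Analysis"
begin

definition is_filtration :: "(int \<Rightarrow> 'a::real_vector set) \<Rightarrow> bool" where
  "is_filtration W \<longleftrightarrow>
     (\<forall>k. subspace (W k)) \<and> (\<forall>k. W k \<subseteq> W (k + 1)) \<and>
     (\<exists>N. \<forall>k. k \<le> - N \<longrightarrow> W k = {0}) \<and>
     (\<exists>N. \<forall>k. k \<ge> N \<longrightarrow> W k = UNIV)"

definition direct_sum_decomp :: "('i \<Rightarrow> 'a::real_vector set) \<Rightarrow> 'i set \<Rightarrow> bool" where
  "direct_sum_decomp U I \<longleftrightarrow>
     (\<forall>i\<in>I. subspace (U i)) \<and>
     span (\<Union>i\<in>I. U i) = UNIV \<and>
     (\<forall>F x. finite F \<and> F \<subseteq> I \<and> (\<forall>i\<in>F. x i \<in> U i) \<and> sum x F = 0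
            \<longrightarrow> (\<forall>i\<in>F. x i = 0))"

definition is_splitting :: "(int \<Rightarrow> 'a::real_vector set) \<Rightarrow> (int \<Rightarrow> 'a set) \<Rightarrow> bool" where
  "is_splitting W S \<longleftrightarrow> direct_sum_decomp S UNIV \<and> (\<forall>k. W k = span (\<Union>j\<in>{..k}. S j))"

text \<open>The splittings spl W (W in Phi) are compatible: there is a decomposition
  V = sum over w in Z^Phi of V[w] with spl W k = sum of V[w] over w(W) = k.\<close>
definition compatible_splittings ::
  "(int \<Rightarrow> 'a::real_vector set) set \<Rightarrow> ((int \<Rightarrow> 'a set) \<Rightarrow> int \<Rightarrow> 'a set) \<Rightarrow> bool" where
  "compatible_splittings Phi spl \<longleftrightarrow>
     (\<forall>W\<in>Phi. is_splitting W (spl W)) \<and>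
     (\<exists>U. direct_sum_decomp U (Phi \<rightarrow>\<^sub>E (UNIV :: int set)) \<and>
          (\<forall>W\<in>Phi. \<forall>k. spl W k = span (\<Union>w\<in>{w \<in> Phi \<rightarrow>\<^sub>E (UNIV :: int set). w W = k}. U w)))"

definition has_compatible_splitting :: "(int \<Rightarrow> 'a::real_vector set) set \<Rightarrow> bool" where
  "has_compatible_splitting Phi \<longleftrightarrow> (\<exists>spl. compatible_splittings Phi spl)"

definition is_metric :: "('a::real_vector \<Rightarrow> 'a \<Rightarrow> real) \<Rightarrow> bool" where
  "is_metric \<mu> \<longleftrightarrow> bilinear \<mu> \<and> (\<forall>x y. \<mu> x y = \<mu> y x) \<and> (\<forall>x. x \<noteq> 0 \<longrightarrow> \<mu> x x > 0)"

definition orth_splitting :: "('a::real_vector \<Rightarrow> 'a \<Rightarrow> real) \<Rightarrow> (int \<Rightarrow> 'a set) \<Rightarrow> int \<Rightarrow> 'a set" where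
  "orth_splitting \<mu> W k = {x \<in> W k. \<forall>y\<in>W (k - 1). \<mu> x y = 0}"

definition gives_compatible_splittings ::
  "('a::real_vector \<Rightarrow> 'a \<Rightarrow> real) \<Rightarrow> (int \<Rightarrow> 'a set) set \<Rightarrow> bool" where
  "gives_compatible_splittings \<mu> Phi \<longleftrightarrow> compatible_splittings Phi (\<lambda>W. orth_splitting \<mu> W)"

definition filt_image :: "('a \<Rightarrow> 'a) \<Rightarrow> (int \<Rightarrow> 'a set) \<Rightarrow> int \<Rightarrow> 'a set" where
  "filt_image g W = (\<lambda>k. g ` W k)"

end

theory Submission
  imports Defs
begin


lemma span_UN_span: "span (\<Union>i\<in>J. span (S i)) = span (\<Union>i\<in>J. S i)"
proof (rule antisym)
  show "span (\<Union>i\<in>J. span (S i)) \<subseteq> span (\<Union>i\<in>J. S i)"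
    by (rule span_minimal) (auto intro: span_mono[THEN subsetD] simp: subspace_span)
  show "span (\<Union>i\<in>J. S i) \<subseteq> span (\<Union>i\<in>J. span (S i))"
    by (rule span_mono) (auto intro: span_base)
qed

lemma coord_int:
  fixes B :: "'a::euclidean_space set"
  assumes "independent B" "A1 \<subseteq> B" "A2 \<subseteq> B"
  shows "span A1 \<inter> span A2 = span (A1 \<inter> A2)"
proof (rule antisym)
  show "span (A1 \<inter> A2) \<subseteq> span A1 \<inter> span A2" by (simp add: span_mono)
  show "span A1 \<inter> span A2 \<subseteq> span (A1 \<inter> A2)"
  proof
    fix x assume x: "x \<in> span A1 \<inter> span A2"
    let ?R = "representation B x"
    have r1: "?R = representation A1 x" using representation_extend[OF assms(1)] x assms(2) by auto
    have r2: "?R = representation A2 x" using representation_extend[OF assms(1)] x assms(3) by auto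
    have sub: "{b. ?R b \<noteq> 0} \<subseteq> A1 \<inter> A2"
    proof
      fix b assume "b \<in> {b. ?R b \<noteq> 0}"
      hence "representation A1 x b \<noteq> 0" "representation A2 x b \<noteq> 0" using r1 r2 by auto
      thus "b \<in> A1 \<inter> A2" using representation_ne_zero by blast
    qed
    have xB: "x \<in> span B" using x assms(2) span_mono by blast
    have "x = (\<Sum>b | ?R b \<noteq> 0. ?R b *\<^sub>R b)"
      using sum_nonzero_representation_eq[OF assms(1) xB] by simp
    also have "\<dots> \<in> span (A1 \<inter> A2)"
      by (intro span_sum span_scale) (use sub in \<open>auto intro: span_base\<close>)
    finally show "x \<in> span (A1 \<inter> A2)" .
  qed
qed

lemma coord_Int_fin:
  fixes B :: "'a::euclidean_space set"
  assumes "independent B" "span B = UNIV" "finite Phi"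
  shows "(\<Inter>W\<in>Phi. span {b\<in>B. P W b}) = span {b\<in>B. \<forall>W\<in>Phi. P W b}"
  using assms(3)
proof (induction Phi rule: finite_induct)
  case empty
  then show ?case using assms(2) by simp
next
  case (insert W0 F)
  have "(\<Inter>W\<in>insert W0 F. span {b\<in>B. P W b}) = span {b\<in>B. P W0 b} \<inter> span {b\<in>B. \<forall>W\<in>F. P W b}"
    using insert by simp
  also have "\<dots> = span ({b\<in>B. P W0 b} \<inter> {b\<in>B. \<forall>W\<in>F. P W b})"
    by (rule coord_int[OF assms(1)]) auto
  also have "{b\<in>B. P W0 b} \<inter> {b\<in>B. \<forall>W\<in>F. P W b} = {b\<in>B. \<forall>W\<in>insert W0 F. P W b}" by auto
  finally show ?case .
qed

lemma card_sub_indep: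
  fixes B :: "'a::euclidean_space set"
  assumes "independent B" "A \<subseteq> B"
  shows "card A = dim (span A)"
  using dim_span_eq_card_independent independent_mono assms by metis



lemma basis_dsd:
  fixes C :: "'a::euclidean_space set"
  assumes indC: "independent C" and spC: "span C = UNIV" and lab: "\<forall>c\<in>C. f c \<in> I"
  shows "direct_sum_decomp (\<lambda>i. span {c\<in>C. f c = i}) I"
  unfolding direct_sum_decomp_def
proof (intro conjI allI impI)
  show "\<forall>i\<in>I. subspace (span {c \<in> C. f c = i})" by (simp add: subspace_span)
  have "C \<subseteq> (\<Union>i\<in>I. span {c \<in> C. f c = i})" using lab by (auto intro: span_base)
  then have "span C \<subseteq> span (\<Union>i\<in>I. span {c \<in> C. f c = i})" by (rule span_mono)
  then show "span (\<Union>i\<in>I. span {c \<in> C. f c = i}) = UNIV" using spC by auto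
  fix F x
  assume H: "finite F \<and> F \<subseteq> I \<and> (\<forall>i\<in>F. x i \<in> span {c \<in> C. f c = i}) \<and> sum x F = 0"
  have finC: "finite C" using indC independent_bound by blast
  have "\<forall>i\<in>F. \<exists>u. x i = (\<Sum>c\<in>{c \<in> C. f c = i}. u c *\<^sub>R c)"
  proof
    fix i assume "i \<in> F"
    then have "x i \<in> span {c \<in> C. f c = i}" using H by auto
    then show "\<exists>u. x i = (\<Sum>c\<in>{c \<in> C. f c = i}. u c *\<^sub>R c)"
      using span_finite[of "{c \<in> C. f c = i}"] finC by auto
  qed
  then obtain u where u: "\<And>i. i\<in>F \<Longrightarrow> x i = (\<Sum>c\<in>{c \<in> C. f c = i}. u i c *\<^sub>R c)"
    by metis
  define U where "U c = (if f c \<in> F then u (f c) c else 0)" for c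
  have "(\<Sum>c\<in>C. U c *\<^sub>R c) = (\<Sum>c\<in>{c\<in>C. f c \<in> F}. U c *\<^sub>R c)"
    by (rule sum.mono_neutral_right) (auto simp: finC U_def)
  also have "\<dots> = (\<Sum>i\<in>F. \<Sum>c\<in>{c\<in>{c\<in>C. f c \<in> F}. f c = i}. U c *\<^sub>R c)"
    by (rule sum.group[symmetric]) (use H finC in auto)
  also have "\<dots> = (\<Sum>i\<in>F. x i)"
  proof (rule sum.cong[OF refl])
    fix i assume i: "i \<in> F"
    have "{c\<in>{c\<in>C. f c \<in> F}. f c = i} = {c \<in> C. f c = i}" using i by auto
    then show "(\<Sum>c\<in>{c\<in>{c\<in>C. f c \<in> F}. f c = i}. U c *\<^sub>R c) = x i"
      using i by (simp add: u U_def)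
  qed
  also have "\<dots> = 0" using H by simp
  finally have z: "(\<Sum>c\<in>C. U c *\<^sub>R c) = 0" .
  have U0: "\<forall>c\<in>C. U c = 0" using indC[unfolded independent_explicit] z by blast
  show "\<forall>i\<in>F. x i = 0"
  proof
    fix i assume i: "i \<in> F"
    have "\<forall>c\<in>{c \<in> C. f c = i}. u i c = 0" using U0 i unfolding U_def by auto
    then show "x i = 0" using u[OF i] by simp
  qed
qed



lemma dsd_basis:
  fixes U :: "'i \<Rightarrow> 'a::euclidean_space set"
  assumes dsd: "direct_sum_decomp U I"
    and bases: "\<forall>i\<in>I. \<exists>Bi. independent Bi \<and> Bi \<subseteq> U i \<and> U i \<subseteq> span Bi \<and> Q Bi"
  obtains B lab where "independent B" "span B = UNIV" "\<forall>b\<in>B. lab b \<in> I \<and> b \<in> U (lab b)"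
    "\<forall>i\<in>I. U i = span {b\<in>B. lab b = i}" "\<forall>i\<in>I. Q {b\<in>B. lab b = i}"
proof -
  from bases obtain Bs where Bs: "\<And>i. i\<in>I \<Longrightarrow> independent (Bs i) \<and> Bs i \<subseteq> U i \<and> U i \<subseteq> span (Bs i) \<and> Q (Bs i)"
    by metis
  have sub: "\<And>i. i \<in> I \<Longrightarrow> subspace (U i)" using dsd unfolding direct_sum_decomp_def by auto
  have dir: "\<And>F x. finite F \<Longrightarrow> F \<subseteq> I \<Longrightarrow> (\<forall>i\<in>F. x i \<in> U i) \<Longrightarrow> sum x F = 0 \<Longrightarrow> (\<forall>i\<in>F. x i = 0)"
    using dsd unfolding direct_sum_decomp_def by blast
  have disj: "i = j" if "i \<in> I" "j \<in> I" "b \<in> Bs i" "b \<in> Bs j" for i j b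
  proof (rule ccontr)
    assume ij: "i \<noteq> j"
    have b0: "b \<noteq> 0" using Bs[OF that(1)] that(3) dependent_zero by blast
    define x where "x k = (if k = i then b else - b)" for k
    have "b \<in> U j" using Bs[OF that(2)] that(4) by auto
    then have "- b \<in> U j" using sub[OF that(2)] subspace_neg by blast
    moreover have "b \<in> U i" using Bs[OF that(1)] that(3) by auto
    ultimately have m: "\<forall>k\<in>{i,j}. x k \<in> U k" using ij unfolding x_def by auto
    have s: "sum x {i,j} = 0"
    proof -
      have "x i = b" "x j = - b" using ij unfolding x_def by auto
      then show ?thesis using ij by simp
    qed
    have f: "finite {i,j}" by simp
    have I: "{i,j} \<subseteq> I" using that by auto
    have "\<forall>k\<in>{i,j}. x k = 0" by (rule dir[OF f I m s])
    then have "x i = 0" by blast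
    then show False using b0 unfolding x_def by simp
  qed
  define B where "B = (\<Union>i\<in>I. Bs i)"
  define lab where "lab b = (SOME i. i \<in> I \<and> b \<in> Bs i)" for b
  have lab: "lab b \<in> I \<and> b \<in> Bs (lab b)" if "b \<in> B" for b
    unfolding lab_def by (rule someI_ex) (use that B_def in auto)
  have fib: "{b\<in>B. lab b = i} = Bs i" if "i \<in> I" for i
  proof -
    have "b \<in> Bs i" if "b \<in> B" "lab b = i" for b using lab[OF that(1)] that by auto
    moreover have "b \<in> B \<and> lab b = i" if "b \<in> Bs i" for b
      using that \<open>i \<in> I\<close> lab[of b] disj[of i "lab b" b] by (auto simp: B_def)
    ultimately show ?thesis by auto
  qed
  have Ui: "U i = span (Bs i)" if "i \<in> I" for i
    using Bs[OF that] span_minimal[of "Bs i" "U i"] sub[OF that] by auto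
  have indB: "independent B"
    unfolding independent_explicit_finite_subsets
  proof (intro allI impI ballI)
    fix S u v
    assume S: "S \<subseteq> B" "finite S" "(\<Sum>v\<in>S. u v *\<^sub>R v) = 0" and v: "v \<in> S"
    define x where "x i = (\<Sum>w\<in>{w\<in>S. lab w = i}. u w *\<^sub>R w)" for i
    have "sum x (lab ` S) = (\<Sum>v\<in>S. u v *\<^sub>R v)"
      unfolding x_def by (rule sum.group) (use S in auto)
    then have sx: "sum x (lab ` S) = 0" using S by simp
    have mx: "\<forall>i\<in>lab ` S. x i \<in> U i"
    proof
      fix i assume "i \<in> lab ` S"
      then have i: "i \<in> I" using lab S by auto
      show "x i \<in> U i" unfolding x_def
        by (rule subspace_sum[OF sub[OF i]], rule subspace_scale[OF sub[OF i]])
           (use Bs[OF i] fib[OF i] S in auto)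
    qed
    have IS: "lab ` S \<subseteq> I" using lab S by auto
    have fS: "finite (lab ` S)" using S by auto
    have "\<forall>i\<in>lab ` S. x i = 0" by (rule dir[OF fS IS mx sx])
    then have x0: "x (lab v) = 0" using v by blast
    have i: "lab v \<in> I" and vB: "v \<in> Bs (lab v)" using lab S v by auto
    have ss: "{w\<in>S. lab w = lab v} \<subseteq> Bs (lab v)" using fib[OF i] S by auto
    have ind: "independent (Bs (lab v))" using Bs[OF i] by auto
    have H: "\<And>T u. T \<subseteq> Bs (lab v) \<Longrightarrow> finite T \<Longrightarrow> (\<Sum>v\<in>T. u v *\<^sub>R v) = 0 \<Longrightarrow> (\<forall>v\<in>T. u v = 0)"
      using ind[unfolded independent_explicit_finite_subsets] by blast
    have fT: "finite {w\<in>S. lab w = lab v}" using S by auto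
    have "(\<Sum>w\<in>{w\<in>S. lab w = lab v}. u w *\<^sub>R w) = 0" using x0 unfolding x_def .
    from H[OF ss fT this] show "u v = 0" using v by blast
  qed
  have "UNIV = span (\<Union>i\<in>I. U i)" using dsd unfolding direct_sum_decomp_def by auto
  also have "\<dots> \<subseteq> span B"
  proof (rule span_minimal)
    show "\<Union> (U ` I) \<subseteq> span B"
    proof
      fix x assume "x \<in> \<Union> (U ` I)"
      then obtain i where i: "i \<in> I" "x \<in> U i" by auto
      then have "x \<in> span (Bs i)" using Bs[OF i(1)] by auto
      moreover have "span (Bs i) \<subseteq> span B" by (rule span_mono) (use i in \<open>auto simp: B_def\<close>)
      ultimately show "x \<in> span B" by auto
    qed
  qed (rule subspace_span)
  finally have spB: "span B = UNIV" by auto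
  show ?thesis
  proof (rule that[of B lab])
    show "independent B" "span B = UNIV" by (fact indB, fact spB)
    show "\<forall>b\<in>B. lab b \<in> I \<and> b \<in> U (lab b)" using lab Bs by blast
    show "\<forall>i\<in>I. U i = span {b \<in> B. lab b = i}" using fib Ui by auto
    show "\<forall>i\<in>I. Q {b \<in> B. lab b = i}" using fib Bs by auto
  qed
qed



lemma mu_lsum:
  assumes "is_metric \<mu>"
  shows "\<mu> (\<Sum>a\<in>A. c a *\<^sub>R a) y = (\<Sum>a\<in>A. c a * \<mu> a y)"
proof -
  have bl: "bilinear \<mu>" using assms unfolding is_metric_def by auto
  show ?thesis
  proof (induction A rule: infinite_finite_induct)
    case (infinite A) then show ?case using bilinear_lzero[OF bl] by simp
  next
    case empty then show ?case using bilinear_lzero[OF bl] by simp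
  next
    case (insert x F)
    then show ?case using bilinear_ladd[OF bl] bilinear_lmul[OF bl] by simp
  qed
qed

lemma mu_sum_orth:
  assumes "is_metric \<mu>" "finite A" "\<forall>x\<in>A. \<forall>y\<in>A. x \<noteq> y \<longrightarrow> \<mu> x y = 0" "a0 \<in> A"
  shows "\<mu> (\<Sum>a\<in>A. c a *\<^sub>R a) a0 = c a0 * \<mu> a0 a0"
proof -
  have "\<mu> (\<Sum>a\<in>A. c a *\<^sub>R a) a0 = (\<Sum>a\<in>A. c a * \<mu> a a0)" by (rule mu_lsum[OF assms(1)])
  also have "\<dots> = c a0 * \<mu> a0 a0 + (\<Sum>a\<in>A - {a0}. c a * \<mu> a a0)"
    by (rule sum.remove[OF assms(2,4)])
  also have "(\<Sum>a\<in>A - {a0}. c a * \<mu> a a0) = 0"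
    using assms(3,4) by (intro sum.neutral) auto
  finally show ?thesis by simp
qed

lemma orth_indep:
  fixes B :: "'a::euclidean_space set"
  assumes "is_metric \<mu>" "finite B" "0 \<notin> B" "\<forall>x\<in>B. \<forall>y\<in>B. x \<noteq> y \<longrightarrow> \<mu> x y = 0"
  shows "independent B"
  unfolding independent_explicit
proof (intro conjI allI impI ballI)
  show "finite B" by fact
  fix c v assume z: "(\<Sum>v\<in>B. c v *\<^sub>R v) = 0" and v: "v \<in> B"
  have "c v * \<mu> v v = \<mu> (\<Sum>v\<in>B. c v *\<^sub>R v) v" using mu_sum_orth[OF assms(1,2,4) v] by simp
  also have "\<dots> = 0" using z bilinear_lzero assms(1) unfolding is_metric_def by (simp add: bilinear_lzero)
  finally have "c v * \<mu> v v = 0" .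
  moreover have "v \<noteq> 0" using assms(3) v by auto
  then have "\<mu> v v > 0" using assms(1) unfolding is_metric_def by auto
  ultimately show "c v = 0" by simp
qed

lemma gs_fin:
  fixes T :: "'a::euclidean_space set"
  assumes mu: "is_metric \<mu>" and "finite T"
  shows "\<exists>B. finite B \<and> B \<subseteq> span T \<and> T \<subseteq> span B \<and> 0 \<notin> B \<and> (\<forall>x\<in>B. \<forall>y\<in>B. x \<noteq> y \<longrightarrow> \<mu> x y = 0)"
  using assms(2)
proof (induction T rule: finite_induct)
  case empty
  show ?case by (rule exI[of _ "{}"]) auto
next
  case (insert x T)
  then obtain B where B: "finite B" "B \<subseteq> span T" "T \<subseteq> span B" "0 \<notin> B"
    "\<forall>x\<in>B. \<forall>y\<in>B. x \<noteq> y \<longrightarrow> \<mu> x y = 0" by blast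
  have sym: "\<And>x y. \<mu> x y = \<mu> y x" and pos: "\<And>x. x \<noteq> 0 \<Longrightarrow> \<mu> x x > 0"
    using mu unfolding is_metric_def by auto
  have bl: "bilinear \<mu>" using mu unfolding is_metric_def by auto
  define s where "s = (\<Sum>b\<in>B. (\<mu> x b / \<mu> b b) *\<^sub>R b)"
  define x' where "x' = x - s"
  have s_sp: "s \<in> span B" unfolding s_def by (intro span_sum span_scale) (auto intro: span_base)
  have BT: "span B \<subseteq> span (insert x T)"
  proof -
    have "span B \<subseteq> span T" using B(2) span_minimal subspace_span by blast
    moreover have "span T \<subseteq> span (insert x T)" by (rule span_mono) auto
    ultimately show ?thesis by blast
  qed
  show ?case
  proof (cases "x' = 0")
    case True
    then have "x = s" unfolding x'_def by simp
    then have "x \<in> span B" using s_sp by simp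
    then show ?thesis using B BT span_mono[of T "insert x T"] by (intro exI[of _ B]) auto
  next
    case False
    have orth: "\<mu> x' b0 = 0" if b0: "b0 \<in> B" for b0
    proof -
      have "\<mu> s b0 = (\<mu> x b0 / \<mu> b0 b0) * \<mu> b0 b0"
        unfolding s_def by (rule mu_sum_orth[OF mu B(1) B(5) b0])
      also have "\<dots> = \<mu> x b0"
      proof -
        have "b0 \<noteq> 0" using B(4) b0 by auto
        then have "\<mu> b0 b0 > 0" by (rule pos)
        then show ?thesis by simp
      qed
      finally show ?thesis unfolding x'_def using bilinear_lsub[OF bl] by simp
    qed
    have x'nB: "x' \<notin> B" using orth pos[OF False] by force
    show ?thesis
    proof (intro exI[of _ "insert x' B"] conjI)
      show "finite (insert x' B)" using B by simp
      have "x \<in> span (insert x T)" by (simp add: span_base)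
      then have "x' \<in> span (insert x T)" unfolding x'_def using s_sp BT span_diff by blast
      then show "insert x' B \<subseteq> span (insert x T)" using BT span_superset by blast
      have "span B \<subseteq> span (insert x' B)" by (rule span_mono) auto
      moreover have "x = x' + s" unfolding x'_def by simp
      ultimately have "x \<in> span (insert x' B)" using s_sp span_add span_base
        by (metis (no_types, lifting) in_mono insertI1)
      then show "insert x T \<subseteq> span (insert x' B)" using B(3) \<open>span B \<subseteq> span (insert x' B)\<close> by blast
      show "0 \<notin> insert x' B" using False B by auto
      show "\<forall>a\<in>insert x' B. \<forall>b\<in>insert x' B. a \<noteq> b \<longrightarrow> \<mu> a b = 0"
        using orth B(5) sym by auto
    qed
  qed
qed

lemma gs_subspace:
  fixes S :: "'a::euclidean_space set"
  assumes mu: "is_metric \<mu>" and S: "subspace S"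
  shows "\<exists>B. independent B \<and> B \<subseteq> S \<and> S \<subseteq> span B \<and> (\<forall>x\<in>B. \<forall>y\<in>B. x \<noteq> y \<longrightarrow> \<mu> x y = 0)"
proof -
  obtain T where T: "T \<subseteq> S" "independent T" "S \<subseteq> span T" by (meson basis_exists)
  have fT: "finite T" using T(2) independent_bound by blast
  obtain B where B: "finite B" "B \<subseteq> span T" "T \<subseteq> span B" "0 \<notin> B" "\<forall>x\<in>B. \<forall>y\<in>B. x \<noteq> y \<longrightarrow> \<mu> x y = 0"
    using gs_fin[OF mu fT] by blast
  have "span T \<subseteq> S" using T(1) S span_minimal by blast
  moreover have "span T \<subseteq> span B" using B(3) span_minimal subspace_span by blast
  ultimately show ?thesis using B T orth_indep[OF mu B(1,4,5)] by (intro exI[of _ B]) auto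
qed

lemma subspace_ker:
  assumes "linear f" shows "subspace {x. f x = (0::real)}"
  unfolding subspace_def using linear_add[OF assms] linear_scale[OF assms] linear_0[OF assms] by auto

lemma orth_span:
  fixes E :: "'a::euclidean_space set"
  assumes mu: "is_metric \<mu>" and fE: "finite E" and E0: "0 \<notin> E"
    and orth: "\<forall>x\<in>E. \<forall>y\<in>E. x \<noteq> y \<longrightarrow> \<mu> x y = 0"
    and A: "A2 \<subseteq> A1" "A1 \<subseteq> E"
  shows "{x \<in> span A1. \<forall>y\<in>span A2. \<mu> x y = 0} = span (A1 - A2)"
proof -
  have bl: "bilinear \<mu>" and sym: "\<And>x y. \<mu> x y = \<mu> y x" and pos: "\<And>x. x \<noteq> 0 \<Longrightarrow> \<mu> x x > 0"
    using mu unfolding is_metric_def by auto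
  have fA1: "finite A1" using A fE finite_subset by blast
  have orthA1: "\<forall>x\<in>A1. \<forall>y\<in>A1. x \<noteq> y \<longrightarrow> \<mu> x y = 0" using orth A by blast
  show ?thesis
  proof (rule antisym)
    show "{x \<in> span A1. \<forall>y\<in>span A2. \<mu> x y = 0} \<subseteq> span (A1 - A2)"
    proof clarify
      fix x assume x: "x \<in> span A1" and xo: "\<forall>y\<in>span A2. \<mu> x y = 0"
      obtain c where c: "x = (\<Sum>a\<in>A1. c a *\<^sub>R a)" using x span_finite[OF fA1] by auto
      have c0: "c a = 0" if "a \<in> A2" for a
      proof -
        have aA1: "a \<in> A1" using that A by auto
        have "c a * \<mu> a a = \<mu> x a" using mu_sum_orth[OF mu fA1 orthA1 aA1] c by simp
        also have "\<dots> = 0" using xo that span_base by blast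
        moreover have "a \<noteq> 0" using E0 A aA1 by auto
        then have "\<mu> a a > 0" by (rule pos)
        ultimately show ?thesis by simp
      qed
      have "x = (\<Sum>a\<in>A1 - A2. c a *\<^sub>R a)"
        unfolding c by (rule sum.mono_neutral_right) (use fA1 c0 in auto)
      also have "\<dots> \<in> span (A1 - A2)" by (intro span_sum span_scale) (auto intro: span_base)
      finally show "x \<in> span (A1 - A2)" .
    qed
    show "span (A1 - A2) \<subseteq> {x \<in> span A1. \<forall>y\<in>span A2. \<mu> x y = 0}"
    proof
      fix x assume x: "x \<in> span (A1 - A2)"
      have "x \<in> span A1" using x span_mono[OF Diff_subset[of A1 A2]] by blast
      moreover have "\<forall>y\<in>span A2. \<mu> x y = 0"
      proof
        fix y assume y: "y \<in> span A2"
        have lin1: "linear (\<lambda>y. \<mu> x y)" for x using bl unfolding bilinear_def by auto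
        have lin2: "linear (\<lambda>x. \<mu> x y)" for y using bl unfolding bilinear_def by auto
        have "\<forall>a\<in>A1 - A2. \<mu> a y = 0"
        proof
          fix a assume a: "a \<in> A1 - A2"
          have "span A2 \<subseteq> {y. \<mu> a y = 0}"
          proof (rule span_minimal)
            show "A2 \<subseteq> {y. \<mu> a y = 0}"
            proof
              fix z assume z: "z \<in> A2"
              then have "a \<noteq> z" "a \<in> E" "z \<in> E" using a A by auto
              then have "\<mu> a z = 0" using orth by blast
              then show "z \<in> {y. \<mu> a y = 0}" by simp
            qed
          qed (rule subspace_ker[OF lin1])
          then show "\<mu> a y = 0" using y by auto
        qed
        then have "span (A1 - A2) \<subseteq> {x. \<mu> x y = 0}"
          by (intro span_minimal) (auto intro: subspace_ker[OF lin2])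
        then show "\<mu> x y = 0" using x by auto
      qed
      ultimately show "x \<in> {x \<in> span A1. \<forall>y\<in>span A2. \<mu> x y = 0}" by auto
    qed
  qed
qed



lemma UN_le: "(\<Union>j\<in>{..k}. {c\<in>E. f c = (j::int)}) = {c\<in>E. f c \<le> k}" by auto

lemma UN_lab:
  assumes "\<forall>c\<in>E. l c \<in> I"
  shows "(\<Union>w\<in>{w\<in>I. w X = k}. {c\<in>E. l c = w}) = {c\<in>E. l c X = k}"
  using assms by auto

lemma orth_basis_compat:
  fixes E :: "'a::euclidean_space set" and Psi :: "(int \<Rightarrow> 'a set) set"
  assumes mu: "is_metric \<mu>" and indE: "independent E" and spE: "span E = UNIV" and E0: "0 \<notin> E"
    and orth: "\<forall>x\<in>E. \<forall>y\<in>E. x \<noteq> y \<longrightarrow> \<mu> x y = 0"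
    and lab: "\<forall>c\<in>E. l c \<in> Psi \<rightarrow>\<^sub>E (UNIV::int set)"
    and filt: "\<forall>X\<in>Psi. \<forall>k. X k = span {c\<in>E. l c X \<le> k}"
  shows "gives_compatible_splittings \<mu> Psi"
proof -
  have fE: "finite E" using indE independent_bound by blast
  have os: "orth_splitting \<mu> X = (\<lambda>k. span {c\<in>E. l c X = k})" if X: "X \<in> Psi" for X
  proof
    fix k
    have "orth_splitting \<mu> X k = {x \<in> span {c\<in>E. l c X \<le> k}. \<forall>y\<in>span {c\<in>E. l c X \<le> k - 1}. \<mu> x y = 0}"
    proof -
      have Xk: "X k = span {c\<in>E. l c X \<le> k}" and Xk1: "X (k-1) = span {c\<in>E. l c X \<le> k - 1}"
        using filt X by blast+
      show ?thesis by (simp only: orth_splitting_def Xk Xk1)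
    qed
    also have "\<dots> = span ({c\<in>E. l c X \<le> k} - {c\<in>E. l c X \<le> k - 1})"
      by (rule orth_span[OF mu fE E0 orth]) auto
    also have "{c\<in>E. l c X \<le> k} - {c\<in>E. l c X \<le> k - 1} = {c\<in>E. l c X = k}" by auto
    finally show "orth_splitting \<mu> X k = span {c\<in>E. l c X = k}" .
  qed
  have split: "is_splitting X (orth_splitting \<mu> X)" if X: "X \<in> Psi" for X
    unfolding is_splitting_def os[OF X]
  proof (intro conjI allI)
    show "direct_sum_decomp (\<lambda>k. span {c \<in> E. l c X = k}) UNIV"
      by (rule basis_dsd[OF indE spE]) auto
    fix k
    have "span (\<Union>j\<in>{..k}. span {c \<in> E. l c X = j}) = span (\<Union>j\<in>{..k}. {c \<in> E. l c X = j})"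
      by (rule span_UN_span)
    also have "\<dots> = span {c\<in>E. l c X \<le> k}" by (simp only: UN_le)
    finally show "X k = span (\<Union>j\<in>{..k}. span {c \<in> E. l c X = j})" using filt X by simp
  qed
  show ?thesis
    unfolding gives_compatible_splittings_def compatible_splittings_def
  proof (intro conjI ballI exI[of _ "\<lambda>w. span {c\<in>E. l c = w}"])
    show "\<And>X. X \<in> Psi \<Longrightarrow> is_splitting X (orth_splitting \<mu> X)" by (rule split)
    show "direct_sum_decomp (\<lambda>w. span {c \<in> E. l c = w}) (Psi \<rightarrow>\<^sub>E UNIV)"
      by (rule basis_dsd[OF indE spE lab])
    show "\<forall>k. orth_splitting \<mu> X k =
             span (\<Union>w\<in>{w \<in> Psi \<rightarrow>\<^sub>E UNIV. w X = k}. span {c \<in> E. l c = w})" if X: "X \<in> Psi" for X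
    proof
      fix k
      have "span (\<Union>w\<in>{w \<in> Psi \<rightarrow>\<^sub>E UNIV. w X = k}. span {c \<in> E. l c = w})
          = span (\<Union>w\<in>{w \<in> Psi \<rightarrow>\<^sub>E UNIV. w X = k}. {c \<in> E. l c = w})" by (rule span_UN_span)
      also have "\<dots> = span {c\<in>E. l c X = k}" using UN_lab[OF lab, of X k] by simp
      finally show "orth_splitting \<mu> X k =
             span (\<Union>w\<in>{w \<in> Psi \<rightarrow>\<^sub>E UNIV. w X = k}. span {c \<in> E. l c = w})"
        using os[OF X] by simp
    qed
  qed
qed



lemma compat_coords:
  fixes B :: "'a::euclidean_space set" and Psi :: "(int \<Rightarrow> 'a set) set"
  assumes cs: "\<forall>X\<in>Psi. is_splitting X (spl X)"
    and sp: "\<forall>X\<in>Psi. \<forall>k. spl X k = span (\<Union>w\<in>{w\<in>Psi \<rightarrow>\<^sub>E (UNIV::int set). w X = k}. U w)"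
    and Ueq: "\<forall>w\<in>Psi \<rightarrow>\<^sub>E (UNIV::int set). U w = span {b\<in>B. lab b = w}"
    and lab: "\<forall>b\<in>B. lab b \<in> Psi \<rightarrow>\<^sub>E (UNIV::int set)"
  shows "\<forall>X\<in>Psi. \<forall>k. X k = span {b\<in>B. lab b X \<le> k}"
proof (intro ballI allI)
  fix X k assume X: "X \<in> Psi"
  have splj: "spl X j = span {b\<in>B. lab b X = j}" for j
  proof -
    have "spl X j = span (\<Union>w\<in>{w\<in>Psi \<rightarrow>\<^sub>E (UNIV::int set). w X = j}. U w)" using sp X by blast
    also have "(\<Union>w\<in>{w\<in>Psi \<rightarrow>\<^sub>E (UNIV::int set). w X = j}. U w)
             = (\<Union>w\<in>{w\<in>Psi \<rightarrow>\<^sub>E (UNIV::int set). w X = j}. span {b\<in>B. lab b = w})"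
      using Ueq by (intro SUP_cong) auto
    also have "span \<dots> = span (\<Union>w\<in>{w\<in>Psi \<rightarrow>\<^sub>E (UNIV::int set). w X = j}. {b\<in>B. lab b = w})"
      by (rule span_UN_span)
    also have "\<dots> = span {b\<in>B. lab b X = j}" using UN_lab[OF lab, of X j] by simp
    finally show ?thesis .
  qed
  have "X k = span (\<Union>j\<in>{..k}. spl X j)" using cs X unfolding is_splitting_def by blast
  also have "\<dots> = span (\<Union>j\<in>{..k}. span {b\<in>B. lab b X = j})" by (simp only: splj)
  also have "\<dots> = span (\<Union>j\<in>{..k}. {b\<in>B. lab b X = j})" by (rule span_UN_span)
  also have "\<dots> = span {b\<in>B. lab b X \<le> k}" by (simp only: UN_le)
  finally show "X k = span {b\<in>B. lab b X \<le> k}" .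
qed

lemma count_eq:
  fixes B E :: "'a::euclidean_space set" and Phi :: "'p set"
  assumes fPhi: "finite Phi"
    and indB: "independent B" and spB: "span B = UNIV"
    and indE: "independent E" and spE: "span E = UNIV"
    and rB: "\<forall>b\<in>B. r b \<in> Phi \<rightarrow>\<^sub>E (UNIV::int set)"
    and lE: "\<forall>e\<in>E. l e \<in> Phi \<rightarrow>\<^sub>E (UNIV::int set)"
    and eq: "\<forall>W\<in>Phi. \<forall>k. span {b\<in>B. r b W \<le> k} = span {e\<in>E. l e W \<le> k}"
    and v: "v \<in> Phi \<rightarrow>\<^sub>E (UNIV::int set)"
  shows "card {b\<in>B. r b = v} = card {e\<in>E. l e = v}"
proof -
  have fB: "finite B" using indB independent_bound by blast
  have fE: "finite E" using indE independent_bound by blast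
  have D: "span {b\<in>B. \<forall>W\<in>Phi. r b W \<le> u W} = span {e\<in>E. \<forall>W\<in>Phi. l e W \<le> u W}" for u
  proof -
    have "span {b\<in>B. \<forall>W\<in>Phi. r b W \<le> u W} = (\<Inter>W\<in>Phi. span {b\<in>B. r b W \<le> u W})"
      by (rule coord_Int_fin[OF indB spB fPhi, symmetric])
    also have "\<dots> = (\<Inter>W\<in>Phi. span {e\<in>E. l e W \<le> u W})"
      using eq by (intro INF_cong) auto
    also have "\<dots> = span {e\<in>E. \<forall>W\<in>Phi. l e W \<le> u W}"
      by (rule coord_Int_fin[OF indE spE fPhi])
    finally show ?thesis .
  qed
  have Lt: "{x\<in>S. (\<forall>W\<in>Phi. f x W \<le> v W) \<and> f x \<noteq> v}
     = (\<Union>W0\<in>Phi. {x\<in>S. \<forall>W\<in>Phi. f x W \<le> (v(W0 := v W0 - 1)) W})"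
    if fS: "\<forall>x\<in>S. f x \<in> Phi \<rightarrow>\<^sub>E (UNIV::int set)" for S :: "'a set" and f
  proof (rule set_eqI, rule iffI)
    fix x assume x: "x \<in> {x\<in>S. (\<forall>W\<in>Phi. f x W \<le> v W) \<and> f x \<noteq> v}"
    then have "\<exists>W0\<in>Phi. f x W0 \<noteq> v W0"
      using fS v by (metis (mono_tags, lifting) PiE_ext mem_Collect_eq)
    then obtain W0 where W0: "W0 \<in> Phi" "f x W0 \<noteq> v W0" by blast
    then have "f x W0 \<le> v W0 - 1" using x by force
    then show "x \<in> (\<Union>W0\<in>Phi. {x\<in>S. \<forall>W\<in>Phi. f x W \<le> (v(W0 := v W0 - 1)) W})"
      using x W0 by auto
  next
    fix x assume "x \<in> (\<Union>W0\<in>Phi. {x\<in>S. \<forall>W\<in>Phi. f x W \<le> (v(W0 := v W0 - 1)) W})"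
    then obtain W0 where W0: "W0 \<in> Phi" "x \<in> S" and le: "\<forall>W\<in>Phi. f x W \<le> (v(W0 := v W0 - 1)) W"
      by blast
    have a: "\<forall>W\<in>Phi. f x W \<le> v W"
    proof
      fix W assume "W \<in> Phi" then show "f x W \<le> v W" using le by (cases "W = W0") force+
    qed
    have "f x W0 \<le> v W0 - 1" using le W0 by force
    then have "f x \<noteq> v" by auto
    then show "x \<in> {x\<in>S. (\<forall>W\<in>Phi. f x W \<le> v W) \<and> f x \<noteq> v}" using a W0 by auto
  qed
  define LeB where "LeB = {b\<in>B. \<forall>W\<in>Phi. r b W \<le> v W}"
  define LeE where "LeE = {e\<in>E. \<forall>W\<in>Phi. l e W \<le> v W}"
  define LtB where "LtB = {b\<in>B. (\<forall>W\<in>Phi. r b W \<le> v W) \<and> r b \<noteq> v}"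
  define LtE where "LtE = {e\<in>E. (\<forall>W\<in>Phi. l e W \<le> v W) \<and> l e \<noteq> v}"
  have spLt: "span LtB = span LtE"
  proof -
    have "span LtB = span (\<Union>W0\<in>Phi. {x\<in>B. \<forall>W\<in>Phi. r x W \<le> (v(W0 := v W0 - 1)) W})"
      unfolding LtB_def using Lt[OF rB] by simp
    also have "\<dots> = span (\<Union>W0\<in>Phi. span {x\<in>B. \<forall>W\<in>Phi. r x W \<le> (v(W0 := v W0 - 1)) W})"
      by (rule span_UN_span[symmetric])
    also have "\<dots> = span (\<Union>W0\<in>Phi. span {x\<in>E. \<forall>W\<in>Phi. l x W \<le> (v(W0 := v W0 - 1)) W})"
      by (simp only: D)
    also have "\<dots> = span (\<Union>W0\<in>Phi. {x\<in>E. \<forall>W\<in>Phi. l x W \<le> (v(W0 := v W0 - 1)) W})"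
      by (rule span_UN_span)
    also have "\<dots> = span LtE"
      unfolding LtE_def using Lt[OF lE] by simp
    finally show ?thesis .
  qed
  have cLe: "card LeB = card LeE"
  proof -
    have "card LeB = dim (span LeB)" by (rule card_sub_indep[OF indB]) (auto simp: LeB_def)
    also have "\<dots> = dim (span LeE)" unfolding LeB_def LeE_def by (simp only: D)
    also have "\<dots> = card LeE" by (rule card_sub_indep[OF indE, symmetric]) (auto simp: LeE_def)
    finally show ?thesis .
  qed
  have cLt: "card LtB = card LtE"
  proof -
    have "card LtB = dim (span LtB)" by (rule card_sub_indep[OF indB]) (auto simp: LtB_def)
    also have "\<dots> = dim (span LtE)" by (simp only: spLt)
    also have "\<dots> = card LtE" by (rule card_sub_indep[OF indE, symmetric]) (auto simp: LtE_def)
    finally show ?thesis .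
  qed
  have uB: "LeB = LtB \<union> {b\<in>B. r b = v}" unfolding LeB_def LtB_def by auto
  have uE: "LeE = LtE \<union> {e\<in>E. l e = v}" unfolding LeE_def LtE_def by auto
  have "card LeB = card LtB + card {b\<in>B. r b = v}"
    unfolding uB by (rule card_Un_disjoint) (use fB in \<open>auto simp: LtB_def\<close>)
  moreover have "card LeE = card LtE + card {e\<in>E. l e = v}"
    unfolding uE by (rule card_Un_disjoint) (use fE in \<open>auto simp: LtE_def\<close>)
  ultimately show ?thesis using cLe cLt by simp
qed



lemma bij_image_filter:
  assumes "bij_betw s B E"
  shows "s ` {b\<in>B. P b} = {e\<in>E. P (inv_into B s e)}"
proof (rule set_eqI, rule iffI)
  fix e assume "e \<in> s ` {b\<in>B. P b}"
  then obtain b where b: "b \<in> B" "P b" "e = s b" by auto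
  then show "e \<in> {e\<in>E. P (inv_into B s e)}"
    using bij_betw_inv_into_left[OF assms b(1)] assms bij_betwE by fastforce
next
  fix e assume e: "e \<in> {e\<in>E. P (inv_into B s e)}"
  then have eim: "e \<in> s ` B" using assms bij_betw_imp_surj_on by blast
  have "inv_into B s e \<in> B" by (rule inv_into_into[OF eim])
  moreover have "s (inv_into B s e) = e" by (rule f_inv_into_f[OF eim])
  ultimately show "e \<in> s ` {b\<in>B. P b}" using e by (metis (mono_tags, lifting) image_eqI mem_Collect_eq)
qed

theorem proposition4p6p12:
  fixes \<mu> :: "'a::euclidean_space \<Rightarrow> 'a \<Rightarrow> real"
    and Phi Phi' :: "(int \<Rightarrow> 'a set) set"
  assumes "is_metric \<mu>"
    and "finite Phi'"
    and "\<forall>W\<in>Phi'. is_filtration W"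
    and "has_compatible_splitting Phi'"
    and "Phi \<subseteq> Phi'"
    and "gives_compatible_splittings \<mu> Phi"
  shows "\<exists>g. linear g \<and> bij g \<and> (\<forall>W\<in>Phi. \<forall>k. g ` W k = W k) \<and>
             gives_compatible_splittings \<mu> (filt_image g ` Phi')"
proof -
  note mu = assms(1)
  have sym: "\<And>x y. \<mu> x y = \<mu> y x" using mu unfolding is_metric_def by auto
  have fPhi: "finite Phi" using assms(2,5) finite_subset by blast
  define I' where "I' = Phi' \<rightarrow>\<^sub>E (UNIV::int set)"
  define I where "I = Phi \<rightarrow>\<^sub>E (UNIV::int set)"
  \<comment> \<open>basis adapted to the compatible splitting of Phi'\<close>
  obtain spl' where "compatible_splittings Phi' spl'" using assms(4) unfolding has_compatible_splitting_def by blast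
  then obtain U' where cs': "\<forall>X\<in>Phi'. is_splitting X (spl' X)" and dsd': "direct_sum_decomp U' I'"
    and sp': "\<forall>X\<in>Phi'. \<forall>k. spl' X k = span (\<Union>w\<in>{w\<in>I'. w X = k}. U' w)"
    unfolding compatible_splittings_def I'_def by blast
  have bases': "\<forall>i\<in>I'. \<exists>Bi. independent Bi \<and> Bi \<subseteq> U' i \<and> U' i \<subseteq> span Bi \<and> True"
    by (meson basis_exists)
  obtain B lab' where indB: "independent B" and spB: "span B = UNIV"
    and labB: "\<forall>b\<in>B. lab' b \<in> I' \<and> b \<in> U' (lab' b)"
    and U'eq: "\<forall>i\<in>I'. U' i = span {b\<in>B. lab' b = i}"
    by (rule dsd_basis[OF dsd' bases']) blast
  have coordB: "\<forall>X\<in>Phi'. \<forall>k. X k = span {b\<in>B. lab' b X \<le> k}"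
    by (rule compat_coords[OF cs' sp'[unfolded I'_def] U'eq[unfolded I'_def]]) (use labB I'_def in auto)
  \<comment> \<open>orthogonal basis adapted to the mu-splitting of Phi\<close>
  obtain U where cs: "\<forall>X\<in>Phi. is_splitting X (orth_splitting \<mu> X)" and dsd: "direct_sum_decomp U I"
    and sp: "\<forall>X\<in>Phi. \<forall>k. orth_splitting \<mu> X k = span (\<Union>w\<in>{w\<in>I. w X = k}. U w)"
    using assms(6) unfolding gives_compatible_splittings_def compatible_splittings_def I_def by blast
  have Usub: "\<And>i. i \<in> I \<Longrightarrow> subspace (U i)" using dsd unfolding direct_sum_decomp_def by blast
  have Uin: "x \<in> orth_splitting \<mu> W (v W)" if "W \<in> Phi" "v \<in> I" "x \<in> U v" for W v x
  proof -
    have "x \<in> (\<Union>w\<in>{w\<in>I. w W = v W}. U w)" using that by blast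
    then have "x \<in> span (\<Union>w\<in>{w\<in>I. w W = v W}. U w)" by (rule span_base)
    then show ?thesis using sp that(1) by blast
  qed
  have Wmono: "W j \<subseteq> W k" if "W \<in> Phi" "j \<le> k" for W j k
  proof -
    have e: "\<And>k. W k = span (\<Union>i\<in>{..k}. orth_splitting \<mu> W i)" using cs that(1) unfolding is_splitting_def by blast
    have "(\<Union>i\<in>{..j}. orth_splitting \<mu> W i) \<subseteq> (\<Union>i\<in>{..k}. orth_splitting \<mu> W i)"
      using that(2) by (intro UN_mono) auto
    then show ?thesis unfolding e[of j] e[of k] by (rule span_mono)
  qed
  have Uorth_lt: "\<mu> y x = 0" if "W \<in> Phi" "v \<in> I" "v' \<in> I" "x \<in> U v" "y \<in> U v'" "v W < v' W" for W v v' x y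
  proof -
    have "x \<in> W (v W)" using Uin[OF that(1,2,4)] unfolding orth_splitting_def by blast
    then have "x \<in> W (v' W - 1)" using Wmono[OF that(1), of "v W" "v' W - 1"] that(6) by auto
    moreover have "y \<in> orth_splitting \<mu> W (v' W)" by (rule Uin[OF that(1,3,5)])
    ultimately show ?thesis unfolding orth_splitting_def by blast
  qed
  have Uorth: "\<mu> x y = 0" if H: "v \<in> I" "v' \<in> I" "v \<noteq> v'" "x \<in> U v" "y \<in> U v'" for v v' x y
  proof -
    obtain W where W: "W \<in> Phi" "v W \<noteq> v' W"
      using H(1-3) unfolding I_def by (metis PiE_ext)
    show ?thesis
    proof (cases "v W < v' W")
      case True then show ?thesis using Uorth_lt[OF W(1) H(1,2,4,5)] sym by metis
    next
      case False then have "v' W < v W" using W(2) by auto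
      then show ?thesis using Uorth_lt[OF W(1) H(2,1,5,4)] by blast
    qed
  qed
  have basesE: "\<forall>i\<in>I. \<exists>Bi. independent Bi \<and> Bi \<subseteq> U i \<and> U i \<subseteq> span Bi \<and>
      (\<lambda>Bi. \<forall>x\<in>Bi. \<forall>y\<in>Bi. x \<noteq> y \<longrightarrow> \<mu> x y = 0) Bi"
    using gs_subspace[OF mu Usub] by blast
  obtain E lab where indE: "independent E" and spE: "span E = UNIV"
    and labE: "\<forall>b\<in>E. lab b \<in> I \<and> b \<in> U (lab b)"
    and Ueq: "\<forall>i\<in>I. U i = span {b\<in>E. lab b = i}"
    and QE: "\<forall>i\<in>I. \<forall>x\<in>{b\<in>E. lab b = i}. \<forall>y\<in>{b\<in>E. lab b = i}. x \<noteq> y \<longrightarrow> \<mu> x y = 0"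
    by (rule dsd_basis[OF dsd basesE]) blast
  have orthE: "\<forall>x\<in>E. \<forall>y\<in>E. x \<noteq> y \<longrightarrow> \<mu> x y = 0"
  proof (intro ballI impI)
    fix x y assume xy: "x \<in> E" "y \<in> E" "x \<noteq> y"
    show "\<mu> x y = 0"
    proof (cases "lab x = lab y")
      case True then show ?thesis using QE labE xy by force
    next
      case False then show ?thesis using Uorth labE xy by blast
    qed
  qed
  have E0: "0 \<notin> E" using indE dependent_zero by blast
  have coordE: "\<forall>X\<in>Phi. \<forall>k. X k = span {e\<in>E. lab e X \<le> k}"
    by (rule compat_coords[OF cs sp[unfolded I_def] Ueq[unfolded I_def]]) (use labE I_def in auto)
  define r where "r b = restrict (lab' b) Phi" for b
  have rI: "\<forall>b\<in>B. r b \<in> I" unfolding r_def I_def by (simp add: restrict_PiE_iff)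
  have rW: "r b W = lab' b W" if "W \<in> Phi" for b W using that unfolding r_def by simp
  have coordBr: "\<forall>W\<in>Phi. \<forall>k. W k = span {b\<in>B. r b W \<le> k}"
  proof (intro ballI allI)
    fix W k assume W: "W \<in> Phi"
    have "{b\<in>B. r b W \<le> k} = {b\<in>B. lab' b W \<le> k}" using rW[OF W] by simp
    moreover have "W k = span {b\<in>B. lab' b W \<le> k}" using coordB assms(5) W by blast
    ultimately show "W k = span {b\<in>B. r b W \<le> k}" by simp
  qed
  have eqBE: "\<forall>W\<in>Phi. \<forall>k. span {b\<in>B. r b W \<le> k} = span {e\<in>E. lab e W \<le> k}"
  proof (intro ballI allI)
    fix W k assume W: "W \<in> Phi"
    have "W k = span {b\<in>B. r b W \<le> k}" using coordBr W by blast
    moreover have "W k = span {e\<in>E. lab e W \<le> k}" using coordE W by blast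
    ultimately show "span {b\<in>B. r b W \<le> k} = span {e\<in>E. lab e W \<le> k}" by simp
  qed
  have labE': "\<forall>e\<in>E. lab e \<in> Phi \<rightarrow>\<^sub>E (UNIV::int set)" using labE unfolding I_def by blast
  have cnt: "card {b\<in>B. r b = v} = card {e\<in>E. lab e = v}" if v: "v \<in> I" for v
    by (rule count_eq[OF fPhi indB spB indE spE rI[unfolded I_def] labE' eqBE v[unfolded I_def]])
  have fB: "finite B" using indB independent_bound by blast
  have fE: "finite E" using indE independent_bound by blast
  have hex: "\<exists>h. bij_betw h {b\<in>B. r b = v} {e\<in>E. lab e = v}" if v: "v \<in> I" for v
  proof (rule finite_same_card_bij)
    show "finite {b\<in>B. r b = v}" using fB by simp
    show "finite {e\<in>E. lab e = v}" using fE by simp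
    show "card {b\<in>B. r b = v} = card {e\<in>E. lab e = v}" by (rule cnt[OF v])
  qed
  have "\<forall>v\<in>I. \<exists>h. bij_betw h {b\<in>B. r b = v} {e\<in>E. lab e = v}" using hex by blast
  then have "\<exists>h. \<forall>v\<in>I. bij_betw (h v) {b\<in>B. r b = v} {e\<in>E. lab e = v}" by (rule bchoice)
  then obtain h where h0: "\<forall>v\<in>I. bij_betw (h v) {b\<in>B. r b = v} {e\<in>E. lab e = v}" by (elim exE)
  have h: "\<And>v. v \<in> I \<Longrightarrow> bij_betw (h v) {b\<in>B. r b = v} {e\<in>E. lab e = v}" using h0 by blast
  define s where "s b = h (r b) b" for b
  have sE: "s b \<in> E \<and> lab (s b) = r b" if "b \<in> B" for b
  proof -
    have "bij_betw (h (r b)) {b'\<in>B. r b' = r b} {e\<in>E. lab e = r b}" using h rI that by blast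
    moreover have "b \<in> {b'\<in>B. r b' = r b}" using that by simp
    ultimately have "h (r b) b \<in> {e\<in>E. lab e = r b}" by (rule bij_betwE[rule_format])
    then show ?thesis unfolding s_def by simp
  qed
  have bijs: "bij_betw s B E"
    unfolding bij_betw_def
  proof
    show "inj_on s B"
    proof (rule inj_onI)
      fix b b' assume bb: "b \<in> B" "b' \<in> B" "s b = s b'"
      then have rr: "r b = r b'" using sE by metis
      have "h (r b) b = h (r b) b'" using bb rr unfolding s_def by simp
      then show "b = b'" using h[of "r b"] rI bb rr unfolding bij_betw_def inj_on_def by auto
    qed
    show "s ` B = E"
    proof
      show "s ` B \<subseteq> E" using sE by auto
      show "E \<subseteq> s ` B"
      proof
        fix e assume e: "e \<in> E"
        then have v: "lab e \<in> I" using labE by auto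
        then have "e \<in> h (lab e) ` {b\<in>B. r b = lab e}" using h[OF v] e bij_betw_imp_surj_on by blast
        then obtain b where bb: "b \<in> B" "r b = lab e" "e = h (lab e) b" by auto
        then have "e = s b" unfolding s_def by simp
        then show "e \<in> s ` B" using bb(1) by (rule image_eqI)
      qed
    qed
  qed
  have labinv: "lab e = r (inv_into B s e)" if "e \<in> E" for e
  proof -
    have eim: "e \<in> s ` B" using bijs that bij_betw_imp_surj_on by blast
    have "inv_into B s e \<in> B" by (rule inv_into_into[OF eim])
    then show ?thesis using sE f_inv_into_f[OF eim] by metis
  qed
  obtain g where lg: "linear g" and gs: "\<forall>x\<in>B. g x = s x"
    using linear_independent_extend[OF indB] by blast
  have gimg: "g ` span A = span (s ` A)" if "A \<subseteq> B" for A
  proof -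
    have "g ` span A = span (g ` A)" by (rule span_linear_image[OF lg, symmetric])
    also have "g ` A = s ` A" using gs that by (auto intro!: image_cong)
    finally show ?thesis .
  qed
  have surjg: "surj g"
  proof -
    have "range g = g ` span B" using spB by simp
    also have "\<dots> = span (s ` B)" by (rule gimg) simp
    also have "\<dots> = UNIV" using bijs spE bij_betw_imp_surj_on by metis
    finally show ?thesis .
  qed
  have injg: "inj g" by (rule linear_surj_imp_inj[OF lg surjg])
  have bijg: "bij g" using injg surjg by (simp add: bij_def)
  have fixPhi: "\<forall>W\<in>Phi. \<forall>k. g ` W k = W k"
  proof (intro ballI allI)
    fix W k assume W: "W \<in> Phi"
    have "g ` W k = g ` span {b\<in>B. r b W \<le> k}" using coordBr W by blast
    also have "\<dots> = span (s ` {b\<in>B. r b W \<le> k})" by (rule gimg) auto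
    also have "s ` {b\<in>B. r b W \<le> k} = {e\<in>E. r (inv_into B s e) W \<le> k}" by (rule bij_image_filter[OF bijs])
    also have "\<dots> = {e\<in>E. lab e W \<le> k}" using labinv by auto
    moreover have "W k = span {e\<in>E. lab e W \<le> k}" using coordE W by blast
    ultimately show "g ` W k = W k" by simp
  qed
  define Psi where "Psi = filt_image g ` Phi'"
  define l where "l e = restrict (\<lambda>X. lab' (inv_into B s e) (filt_image (inv g) X)) Psi" for e
  have backw: "filt_image (inv g) (filt_image g W) = W" for W
    unfolding filt_image_def using injg by (auto simp: image_image inv_f_f)
  have lPi: "\<forall>c\<in>E. l c \<in> Psi \<rightarrow>\<^sub>E (UNIV::int set)" unfolding l_def by (simp add: restrict_PiE_iff)
  have filt: "\<forall>X\<in>Psi. \<forall>k. X k = span {c\<in>E. l c X \<le> k}"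
  proof (intro ballI allI)
    fix X k assume X: "X \<in> Psi"
    then obtain W where W: "W \<in> Phi'" "X = filt_image g W" unfolding Psi_def by auto
    have lc: "l c X = lab' (inv_into B s c) W" for c using X W backw unfolding l_def by simp
    have "X k = g ` W k" using W unfolding filt_image_def by simp
    also have "\<dots> = g ` span {b\<in>B. lab' b W \<le> k}" using coordB W by blast
    also have "\<dots> = span (s ` {b\<in>B. lab' b W \<le> k})" by (rule gimg) auto
    also have "s ` {b\<in>B. lab' b W \<le> k} = {c\<in>E. l c X \<le> k}"
      unfolding lc by (rule bij_image_filter[OF bijs])
    finally show "X k = span {c\<in>E. l c X \<le> k}" .
  qed
  have "gives_compatible_splittings \<mu> Psi"
    by (rule orth_basis_compat[OF mu indE spE E0 orthE lPi filt])
  then show ?thesis using lg bijg fixPhi unfolding Psi_def by blast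
qed

end
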